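(* Let $G=(V,E)$ be a graph with $|V|\ge d+1$, fix distinct vertices $v_1,\dots,v_d$ and the space $X_{G,d}$. Let $p\in X_{G,d}$ be such that $p(v_1),\dots,p(v_d)$ are affinely independent. Then the restriction of the linear map $R(G,p):(\mathbb{C}^d)^V\to\mathbb{C}^E$ to the linear subspace $X_{G,d}$ has rank $d|V|-\binom{d+1}{2}$ if and only if $(G,p)$ is infinitesimally rigid.
   Context: On $\mathbb{C}^d$ use $\|x\|^2=\sum x_i^2$ and the bilinear dot product $x\cdot y=\sum x_iy_i$. For a graph $G=(V,E)$ with at least $d+1$ vertices and a fixed sequence of distinct vertices $v_1,\dots,v_d$, define $X_{G,d}=\{p\in(\mathbb{C}^d)^V : p_j(v_k)=0 \text{ for all } 1\le k\le j\le d\}$, where $p_j(v)$ is the $j$-th coordinate of $p(v)$. The rigidity matrix $R(G,p)$ is the $|E|\times d|V|$ matrix whose row for edge $uv$ has $p(u)-p(v)$ in the $d$ columns of $u$, $p(v)-p(u)$ in the $d$ columns of $v$, and zeros elsewhere (it is the Jacobian at $p$ of $p\mapsto(\tfrac12\|p(v)-p(w)\|^2)_{vw\in E}$). The framework $(G,p)$ is infinitesimally rigid if $\operatorname{rank}R(G,p)=d|V|-\binom{d+1}{2}$, or $G=K_n$ with $n\le d+1$ and the points $p(v)$ affinely independent. *)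

theory Defs
  imports "HOL-Analysis.Analysis" "HOL-Library.Function_Algebras"
begin

text \<open>A (finite simple) graph is a finite vertex set V together with an edge set E of
  ordered pairs, each undirected edge listed once in some orientation (the orientation
  is irrelevant: the row of an edge only changes sign).
  A configuration p in (C^d)^V is a function p :: 'a => nat => complex, where p v i is
  the i-th coordinate (1 <= i <= d) of p(v); values outside V x {1..d} are ignored /
  required to be zero for elements of the ambient linear space.\<close>

definition simple_graph :: "'a set \<Rightarrow> ('a \<times> 'a) set \<Rightarrow> bool" where
  "simple_graph V E \<longleftrightarrow> finite V \<and> E \<subseteq> V \<times> V \<and> (\<forall>u. (u, u) \<notin> E)
     \<and> (\<forall>u v. (u, v) \<in> E \<longrightarrow> (v, u) \<notin> E)"

definition complete_graph :: "'a set \<Rightarrow> ('a \<times> 'a) set \<Rightarrow> bool" where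
  "complete_graph V E \<longleftrightarrow> (\<forall>u\<in>V. \<forall>v\<in>V. u \<noteq> v \<longrightarrow> (u, v) \<in> E \<or> (v, u) \<in> E)"

definition conf_space :: "nat \<Rightarrow> 'a set \<Rightarrow> ('a \<Rightarrow> nat \<Rightarrow> complex) set" where
  "conf_space d V = {q. \<forall>v i. (v \<notin> V \<or> i \<notin> {1..d}) \<longrightarrow> q v i = 0}"

definition X_space :: "nat \<Rightarrow> 'a set \<Rightarrow> (nat \<Rightarrow> 'a) \<Rightarrow> ('a \<Rightarrow> nat \<Rightarrow> complex) set" where
  "X_space d V vs = {q \<in> conf_space d V. \<forall>j k. 1 \<le> k \<and> k \<le> j \<and> j \<le> d \<longrightarrow> q (vs k) j = 0}"

definition rigidity_map :: "nat \<Rightarrow> ('a \<times> 'a) set \<Rightarrow> ('a \<Rightarrow> nat \<Rightarrow> complex)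
    \<Rightarrow> ('a \<Rightarrow> nat \<Rightarrow> complex) \<Rightarrow> ('a \<times> 'a \<Rightarrow> complex)" where
  "rigidity_map d E p q = (\<lambda>(u, v). if (u, v) \<in> E then
      (\<Sum>i=1..d. (p u i - p v i) * q u i + (p v i - p u i) * q v i) else 0)"

definition cscale :: "complex \<Rightarrow> ('b \<Rightarrow> complex) \<Rightarrow> ('b \<Rightarrow> complex)" where
  "cscale c f = (\<lambda>e. c * f e)"

definition rank_on :: "nat \<Rightarrow> ('a \<times> 'a) set \<Rightarrow> ('a \<Rightarrow> nat \<Rightarrow> complex)
    \<Rightarrow> ('a \<Rightarrow> nat \<Rightarrow> complex) set \<Rightarrow> nat" where
  "rank_on d E p S = vector_space.dim cscale (rigidity_map d E p ` S)"

definition aff_indep :: "nat \<Rightarrow> 'b set \<Rightarrow> ('b \<Rightarrow> nat \<Rightarrow> complex) \<Rightarrow> bool" where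
  "aff_indep d S x \<longleftrightarrow> (\<forall>c :: 'b \<Rightarrow> complex.
      (\<Sum>s\<in>S. c s) = 0 \<and> (\<forall>i\<in>{1..d}. (\<Sum>s\<in>S. c s * x s i) = 0) \<longrightarrow> (\<forall>s\<in>S. c s = 0))"

definition inf_rigid :: "nat \<Rightarrow> 'a set \<Rightarrow> ('a \<times> 'a) set \<Rightarrow> ('a \<Rightarrow> nat \<Rightarrow> complex) \<Rightarrow> bool" where
  "inf_rigid d V E p \<longleftrightarrow>
     int (rank_on d E p (conf_space d V)) = int d * int (card V) - int ((d + 1) choose 2)
     \<or> (complete_graph V E \<and> card V \<le> d + 1 \<and> aff_indep d V p)"

end

theory Submission
  imports Defs
begin

lemma sum_single:
  assumes "finite A" "m \<in> A" "\<And>l. l \<in> A \<Longrightarrow> l \<noteq> m \<Longrightarrow> f l = 0"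
  shows "sum f A = f m"
proof -
  have "sum f A = f m + sum f (A - {m})" using assms by (simp add: sum.remove)
  also have "sum f (A - {m}) = 0" using assms by (intro sum.neutral) auto
  finally show ?thesis by simp
qed

lemma span_tri:
  fixes y :: "nat \<Rightarrow> nat \<Rightarrow> complex"
  assumes supp: "\<And>j l. 2 \<le> j \<Longrightarrow> j \<le> N \<Longrightarrow> l = 0 \<or> j \<le> l \<Longrightarrow> y j l = 0"
    and piv: "\<And>n. 1 \<le> n \<Longrightarrow> Suc n \<le> N \<Longrightarrow> y (Suc n) n \<noteq> 0"
  shows "n \<le> N \<Longrightarrow> 1 \<le> n \<Longrightarrow> (\<And>l. l = 0 \<or> n \<le> l \<Longrightarrow> x l = 0)
     \<Longrightarrow> \<exists>c. \<forall>l. x l = (\<Sum>j\<in>{2..n}. c j * y j l)"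
proof (induction n arbitrary: x)
  case 0
  then show ?case by simp
next
  case (Suc n)
  show ?case
  proof (cases "n = 0")
    case True
    have "\<forall>l. x l = 0"
    proof
      fix l show "x l = 0" using Suc.prems(3)[of l] True by (cases l) auto
    qed
    then show ?thesis using True by auto
  next
    case False
    define \<pi> where "\<pi> = y (Suc n) n"
    have pi: "\<pi> \<noteq> 0" unfolding \<pi>_def using piv[of n] False Suc.prems by auto
    define x' where "x' = (\<lambda>l. x l - (x n / \<pi>) * y (Suc n) l)"
    have "x' l = 0" if lh: "l = 0 \<or> n \<le> l" for l
    proof -
      consider "l = 0" | "l = n" | "Suc n \<le> l" using lh by (metis Suc_leI le_neq_implies_less)
      then show ?thesis
      proof cases
        case 1 then show ?thesis unfolding x'_def using Suc.prems supp[of "Suc n" l] False by auto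
      next
        case 2 then show ?thesis unfolding x'_def using pi by (simp add: \<pi>_def)
      next
        case 3 then show ?thesis unfolding x'_def using Suc.prems supp[of "Suc n" l] False by auto
      qed
    qed
    then obtain c where c: "\<forall>l. x' l = (\<Sum>j\<in>{2..n}. c j * y j l)"
      using Suc.IH[of x'] Suc.prems False by auto
    define c' where "c' = c(Suc n := x n / \<pi>)"
    have "x l = (\<Sum>j\<in>{2..Suc n}. c' j * y j l)" for l
    proof -
      have "{2..Suc n} = insert (Suc n) {2..n}" using False by auto
      then have "(\<Sum>j\<in>{2..Suc n}. c' j * y j l) = c' (Suc n) * y (Suc n) l + (\<Sum>j\<in>{2..n}. c' j * y j l)"
        by simp
      also have "(\<Sum>j\<in>{2..n}. c' j * y j l) = (\<Sum>j\<in>{2..n}. c j * y j l)"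
        unfolding c'_def by (intro sum.cong) auto
      finally have "(\<Sum>j\<in>{2..Suc n}. c' j * y j l) = (x n / \<pi>) * y (Suc n) l + x' l"
        using c[rule_format, of l] unfolding c'_def by simp
      then show ?thesis unfolding x'_def by simp
    qed
    then show ?thesis by blast
  qed
qed

lemma orth_tri:
  fixes y :: "nat \<Rightarrow> nat \<Rightarrow> complex"
  assumes supp: "\<And>j l. 2 \<le> j \<Longrightarrow> j \<le> N \<Longrightarrow> l = 0 \<or> j \<le> l \<Longrightarrow> y j l = 0"
    and piv: "\<And>n. 1 \<le> n \<Longrightarrow> Suc n \<le> N \<Longrightarrow> y (Suc n) n \<noteq> 0"
    and orth: "\<And>j. 2 \<le> j \<Longrightarrow> j \<le> Suc n \<Longrightarrow> (\<Sum>l\<in>{1..D}. y j l * x l) = 0"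
    and nN: "Suc n \<le> N" and ND: "n \<le> D"
  shows "\<forall>l. 1 \<le> l \<and> l \<le> n \<longrightarrow> x l = 0"
proof -
  have "1 \<le> l \<longrightarrow> l \<le> n \<longrightarrow> x l = 0" for l
  proof (induction l rule: less_induct)
    case (less l)
    show ?case
    proof (intro impI)
      assume l: "1 \<le> l" "l \<le> n"
      have "(\<Sum>l'\<in>{1..D}. y (Suc l) l' * x l') = y (Suc l) l * x l"
      proof (rule sum_single)
        fix l' assume "l' \<in> {1..D}" "l' \<noteq> l"
        then consider "l' < l" | "Suc l \<le> l'" by linarith
        then show "y (Suc l) l' * x l' = 0"
        proof cases
          case 1 then show ?thesis using less.IH[of l'] \<open>l' \<in> {1..D}\<close> l by auto
        next
          case 2 then show ?thesis using supp[of "Suc l" l'] l nN by auto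
        qed
      qed (use l ND in auto)
      then have "y (Suc l) l * x l = 0" using orth[of "Suc l"] l by auto
      moreover have "y (Suc l) l \<noteq> 0" using piv[of l] l nN by auto
      ultimately show "x l = 0" by simp
    qed
  qed
  then show ?thesis by blast
qed


lemma sum_fun_app: "(sum f A) x = sum (\<lambda>a. f a x) A"
  by (induction A rule: infinite_finite_induct) auto

lemma vs_cscale: "vector_space (cscale :: complex \<Rightarrow> ('b \<Rightarrow> complex) \<Rightarrow> ('b \<Rightarrow> complex))"
  unfolding vector_space_def cscale_def by (auto simp: algebra_simps fun_eq_iff)

interpretation cs: vector_space "cscale :: complex \<Rightarrow> ('b \<Rightarrow> complex) \<Rightarrow> ('b \<Rightarrow> complex)"
  by (rule vs_cscale)

definition delta :: "'a \<times> nat \<Rightarrow> 'a \<Rightarrow> nat \<Rightarrow> complex" where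
  "delta a v l = (if (v, l) = a then 1 else 0)"

context
  fixes d :: nat and V :: "'a set" and E :: "('a \<times> 'a) set"
    and vs :: "nat \<Rightarrow> 'a" and p :: "'a \<Rightarrow> nat \<Rightarrow> complex"
  assumes fin: "finite V" and EV: "E \<subseteq> V \<times> V"
    and inj: "inj_on vs {1..d}" and vsV: "vs ` {1..d} \<subseteq> V"
    and pX: "p \<in> X_space d V vs"
    and aff: "aff_indep d {1..d} (\<lambda>k. p (vs k))"
begin

lemma p_out: "v \<notin> V \<or> l \<notin> {1..d} \<Longrightarrow> p v l = 0"
  using pX unfolding X_space_def conf_space_def by auto

lemma p_vs: "1 \<le> k \<Longrightarrow> k \<le> l \<Longrightarrow> p (vs k) l = 0"
  using pX p_out[of "vs k" l] unfolding X_space_def by (cases "l \<le> d") auto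

lemma p_vs1: "p (vs 1) l = 0"
  using p_vs[of 1 l] p_out[of "vs 1" l] by (cases l) auto

lemma pivot: "1 \<le> n \<Longrightarrow> Suc n \<le> d \<Longrightarrow> p (vs (Suc n)) n \<noteq> 0"
proof (induction n rule: less_induct)
  case (less n)
  show ?case
  proof
    assume z: "p (vs (Suc n)) n = 0"
    have "\<exists>c. \<forall>l. p (vs (Suc n)) l = (\<Sum>j\<in>{2..n}. c j * p (vs j) l)"
    proof (rule span_tri[of n "\<lambda>j. p (vs j)"])
      fix j l assume "2 \<le> j" "j \<le> n" "l = 0 \<or> j \<le> l"
      then show "p (vs j) l = 0" using p_vs[of j l] p_out[of "vs j" 0] by auto
    next
      fix m assume "1 \<le> m" "Suc m \<le> n"
      then show "p (vs (Suc m)) m \<noteq> 0" using less.IH[of m] less.prems by auto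
    next
      fix l assume lh: "l = 0 \<or> n \<le> l"
      consider "l = 0" | "l = n" | "Suc n \<le> l" using lh by (metis Suc_leI le_neq_implies_less)
      then show "p (vs (Suc n)) l = 0"
        by cases (use z p_vs[of "Suc n" l] p_out[of "vs (Suc n)" 0] in auto)
    qed (use less.prems in auto)
    then obtain c where c: "\<forall>l. p (vs (Suc n)) l = (\<Sum>j\<in>{2..n}. c j * p (vs j) l)" by blast
    define e where "e s = (if s = Suc n then -1 else if s \<in> {2..n} then c s
       else if s = 1 then 1 - (\<Sum>j\<in>{2..n}. c j) else 0)" for s
    have esum: "(\<Sum>s\<in>{1..d}. e s * g s) = (1 - (\<Sum>j\<in>{2..n}. c j)) * g 1
        + (\<Sum>j\<in>{2..n}. c j * g j) - g (Suc n)" for g :: "nat \<Rightarrow> complex"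
    proof -
      have "(\<Sum>s\<in>{1..d}. e s * g s) = (\<Sum>s\<in>{1..Suc n}. e s * g s)"
        by (rule sum.mono_neutral_right) (use less.prems in \<open>auto simp: e_def\<close>)
      also have "{1..Suc n} = insert 1 (insert (Suc n) {2..n})" using less.prems by auto
      also have "(\<Sum>s\<in>insert 1 (insert (Suc n) {2..n}). e s * g s)
          = e 1 * g 1 + (e (Suc n) * g (Suc n) + (\<Sum>s\<in>{2..n}. e s * g s))"
        using less.prems by (simp add: sum.insert)
      also have "(\<Sum>s\<in>{2..n}. e s * g s) = (\<Sum>j\<in>{2..n}. c j * g j)"
        by (intro sum.cong) (auto simp: e_def)
      finally show ?thesis using less.prems by (simp add: e_def)
    qed
    have h: "sum e {1..d} = 0 \<and> (\<forall>i\<in>{1..d}. (\<Sum>s\<in>{1..d}. e s * p (vs s) i) = 0)"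
    proof (intro conjI ballI)
      show "sum e {1..d} = 0" using esum[of "\<lambda>_. 1"] by simp
      fix i assume "i \<in> {1..d}"
      show "(\<Sum>s\<in>{1..d}. e s * p (vs s) i) = 0"
        using esum[of "\<lambda>s. p (vs s) i"] c[rule_format, of i] p_vs1[of i] by simp
    qed
    have "e (Suc n) = 0" using aff[unfolded aff_indep_def, rule_format, OF h] less.prems by auto
    then show False unfolding e_def by auto
  qed
qed


abbreviation "R \<equiv> rigidity_map d E p"

lemma R_edge: "(u,v) \<in> E \<Longrightarrow> R q (u,v) = (\<Sum>i\<in>{1..d}. (p u i - p v i) * (q u i - q v i))"
  unfolding rigidity_map_def by (auto intro!: sum.cong simp: algebra_simps)

lemma R_nonedge: "(u,v) \<notin> E \<Longrightarrow> R q (u,v) = 0"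
  unfolding rigidity_map_def by auto

lemma R_eq:
  assumes "\<And>u v. u \<in> V \<Longrightarrow> v \<in> V \<Longrightarrow>
     (\<Sum>i\<in>{1..d}. (p u i - p v i) * ((q1 u i - q2 u i) - (q1 v i - q2 v i))) = 0"
  shows "R q1 = R q2"
proof (rule ext, clarify)
  fix u v
  show "R q1 (u,v) = R q2 (u,v)"
  proof (cases "(u,v) \<in> E")
    case True
    then have uv: "u \<in> V" "v \<in> V" using EV by auto
    have "R q1 (u,v) - R q2 (u,v) = (\<Sum>i\<in>{1..d}. (p u i - p v i) * ((q1 u i - q2 u i) - (q1 v i - q2 v i)))"
      using True by (simp add: R_edge sum_subtractf[symmetric] algebra_simps)
    then show ?thesis using assms[OF uv] by simp
  qed (simp add: R_nonedge)
qed

definition tau :: "nat \<Rightarrow> (nat \<Rightarrow> complex) \<Rightarrow> (nat \<Rightarrow> complex) \<Rightarrow> nat \<Rightarrow> complex" where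
  "tau n c x l = (if Suc n \<le> l \<and> l \<le> d then c l * x n else 0)
      - (if l = n then (\<Sum>j\<in>{Suc n..d}. c j * x j) else 0)"

lemma tau_diff: "tau n c x l - tau n c y l = tau n c (\<lambda>i. x i - y i) l"
  unfolding tau_def by (cases "l = n") (auto simp: right_diff_distrib sum_subtractf)

lemma tau_orth: "1 \<le> n \<Longrightarrow> Suc n \<le> d \<Longrightarrow> (\<Sum>i\<in>{1..d}. D i * tau n c D i) = 0"
proof -
  assume n: "1 \<le> n" "Suc n \<le> d"
  have "(\<Sum>i\<in>{1..d}. D i * tau n c D i) = (\<Sum>i\<in>{1..d}. (if Suc n \<le> i \<and> i \<le> d then D i * c i * D n else 0))
      - (\<Sum>i\<in>{1..d}. (if i = n then D n * (\<Sum>j\<in>{Suc n..d}. c j * D j) else 0))"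
  proof -
    have pt: "D i * tau n c D i = (if Suc n \<le> i \<and> i \<le> d then D i * c i * D n else 0)
      - (if i = n then D n * (\<Sum>j\<in>{Suc n..d}. c j * D j) else 0)" for i
      unfolding tau_def by (auto simp: right_diff_distrib)
    show ?thesis unfolding pt by (rule sum_subtractf)
  qed
  also have "(\<Sum>i\<in>{1..d}. (if Suc n \<le> i \<and> i \<le> d then D i * c i * D n else 0)) = (\<Sum>i\<in>{Suc n..d}. D i * c i * D n)"
    using n by (intro sum.mono_neutral_cong_right) auto
  also have "(\<Sum>i\<in>{1..d}. (if i = n then D n * (\<Sum>j\<in>{Suc n..d}. c j * D j) else 0)) = D n * (\<Sum>j\<in>{Suc n..d}. c j * D j)"
    using n by simp
  finally show ?thesis by (simp add: sum_distrib_left sum_distrib_right algebra_simps)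
qed

lemma reduce:
  assumes q: "q \<in> conf_space d V"
  shows "\<exists>q'\<in>X_space d V vs. R q' = R q"
proof -
  have "n \<le> d \<Longrightarrow> \<exists>q'\<in>conf_space d V. R q' = R q \<and>
     (\<forall>k j. 1 \<le> k \<and> k \<le> n \<and> k \<le> j \<and> j \<le> d \<longrightarrow> q' (vs k) j = 0)" for n
  proof (induction n)
    case 0
    then show ?case using q by auto
  next
    case (Suc n)
    then obtain q' where q'c: "q' \<in> conf_space d V" and Rq': "R q' = R q"
      and z: "\<And>k j. 1 \<le> k \<Longrightarrow> k \<le> n \<Longrightarrow> k \<le> j \<Longrightarrow> j \<le> d \<Longrightarrow> q' (vs k) j = 0" by auto
    have q'0: "q' v l = 0" if "v \<notin> V \<or> l \<notin> {1..d}" for v l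
      using q'c that unfolding conf_space_def by auto
    show ?case
    proof (cases "n = 0")
      case True
      define q'' where "q'' v l = q' v l - (if v \<in> V then q' (vs 1) l else 0)" for v l
      have "q'' \<in> conf_space d V" unfolding conf_space_def q''_def using q'0 by auto
      moreover have "R q'' = R q'"
        by (rule R_eq) (simp add: q''_def)
      moreover have "q'' (vs k) j = 0" if "1 \<le> k" "k \<le> Suc n" "k \<le> j" "j \<le> d" for k j
      proof -
        have "k = 1" using that True by auto
        moreover have "vs 1 \<in> V" using vsV that by auto
        ultimately show ?thesis unfolding q''_def by simp
      qed
      ultimately show ?thesis using Rq' by (intro bexI[of _ q'']) auto
    next
      case False
      define \<pi> where "\<pi> = p (vs (Suc n)) n"
      have pi: "\<pi> \<noteq> 0" unfolding \<pi>_def using pivot[of n] False Suc.prems by auto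
      define c where "c j = q' (vs (Suc n)) j / \<pi>" for j
      define q'' where "q'' v l = q' v l - (if v \<in> V then tau n c (p v) l else 0)" for v l
      have "q'' \<in> conf_space d V" unfolding conf_space_def q''_def tau_def using q'0 False Suc.prems by auto
      moreover have "R q'' = R q'"
      proof (rule R_eq)
        fix u v assume uv: "u \<in> V" "v \<in> V"
        have "(\<Sum>i\<in>{1..d}. (p u i - p v i) * ((q'' u i - q' u i) - (q'' v i - q' v i)))
           = - (\<Sum>i\<in>{1..d}. (\<lambda>i. p v i - p u i) i * tau n c (\<lambda>i. p v i - p u i) i)"
        proof -
          have pt: "(p u i - p v i) * ((q'' u i - q' u i) - (q'' v i - q' v i))
             = - ((\<lambda>i. p v i - p u i) i * tau n c (\<lambda>i. p v i - p u i) i)" for i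
          proof -
            have "(q'' u i - q' u i) - (q'' v i - q' v i) = tau n c (p v) i - tau n c (p u) i"
              using uv by (simp add: q''_def)
            also have "\<dots> = tau n c (\<lambda>i. p v i - p u i) i" by (rule tau_diff)
            finally show ?thesis by (simp add: algebra_simps)
          qed
          show ?thesis unfolding pt by (rule sum_negf)
        qed
        also have "\<dots> = 0" using tau_orth[of n "\<lambda>i. p v i - p u i" c] False Suc.prems by simp
        finally show "(\<Sum>i\<in>{1..d}. (p u i - p v i) * ((q'' u i - q' u i) - (q'' v i - q' v i))) = 0" .
      qed
      moreover have "q'' (vs k) j = 0" if k: "1 \<le> k" "k \<le> Suc n" "k \<le> j" "j \<le> d" for k j
      proof -
        have vk: "vs k \<in> V" using vsV k by auto
        show ?thesis
        proof (cases "k \<le> n")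
          case True
          have "tau n c (p (vs k)) j = 0"
            unfolding tau_def using p_vs[of k n] p_vs[of k] True k by auto
          then show ?thesis using z[OF k(1) True k(3,4)] vk unfolding q''_def by simp
        next
          case False
          then have "k = Suc n" using k by auto
          then show ?thesis using vk k pi unfolding q''_def tau_def c_def \<pi>_def by auto
        qed
      qed
      ultimately show ?thesis using Rq' by (intro bexI[of _ q'']) auto
    qed
  qed
  from this[of d] obtain q' where "q' \<in> conf_space d V" "R q' = R q"
    "\<forall>k j. 1 \<le> k \<and> k \<le> d \<and> k \<le> j \<and> j \<le> d \<longrightarrow> q' (vs k) j = 0" by auto
  then show ?thesis unfolding X_space_def by auto
qed

lemma image_eq: "R ` X_space d V vs = R ` conf_space d V"
proof
  show "R ` X_space d V vs \<subseteq> R ` conf_space d V" unfolding X_space_def by auto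
  show "R ` conf_space d V \<subseteq> R ` X_space d V vs"
  proof
    fix f assume "f \<in> R ` conf_space d V"
    then obtain q where q: "q \<in> conf_space d V" "f = R q" by auto
    then obtain q' where "q' \<in> X_space d V vs" "R q' = R q" using reduce by blast
    then show "f \<in> R ` X_space d V vs" using q by (intro image_eqI[of _ _ q']) auto
  qed
qed


lemma R_diff_fun: "R (\<lambda>v l. q1 v l - q2 v l) e = R q1 e - R q2 e"
proof (cases e)
  case (Pair u v)
  show ?thesis
  proof (cases "(u,v) \<in> E")
    case True
    then show ?thesis unfolding Pair
      by (simp add: R_edge sum_subtractf[symmetric] algebra_simps)
  qed (simp add: Pair R_nonedge)
qed

lemma R_lin:
  assumes "finite A"
  shows "R (\<lambda>v l. \<Sum>a\<in>A. c a * f a v l) = (\<lambda>e. \<Sum>a\<in>A. c a * R (f a) e)"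
proof (rule ext, clarify)
  fix u v
  show "R (\<lambda>v l. \<Sum>a\<in>A. c a * f a v l) (u,v) = (\<Sum>a\<in>A. c a * R (f a) (u,v))"
  proof (cases "(u,v) \<in> E")
    case True
    have "R (\<lambda>v l. \<Sum>a\<in>A. c a * f a v l) (u,v)
        = (\<Sum>i\<in>{1..d}. \<Sum>a\<in>A. c a * ((p u i - p v i) * (f a u i - f a v i)))"
    proof -
      have pt: "(p u i - p v i) * ((\<Sum>a\<in>A. c a * f a u i) - (\<Sum>a\<in>A. c a * f a v i))
          = (\<Sum>a\<in>A. c a * ((p u i - p v i) * (f a u i - f a v i)))" for i
      proof -
        have "(\<Sum>a\<in>A. c a * f a u i) - (\<Sum>a\<in>A. c a * f a v i) = (\<Sum>a\<in>A. c a * (f a u i - f a v i))"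
          by (simp add: sum_subtractf[symmetric] right_diff_distrib)
        then have "(p u i - p v i) * ((\<Sum>a\<in>A. c a * f a u i) - (\<Sum>a\<in>A. c a * f a v i))
           = (\<Sum>a\<in>A. (p u i - p v i) * (c a * (f a u i - f a v i)))"
          by (simp add: sum_distrib_left)
        also have "\<dots> = (\<Sum>a\<in>A. c a * ((p u i - p v i) * (f a u i - f a v i)))"
          by (rule sum.cong) (auto simp: mult.left_commute)
        finally show ?thesis .
      qed
      show ?thesis using True by (simp only: R_edge pt)
    qed
    also have "\<dots> = (\<Sum>a\<in>A. \<Sum>i\<in>{1..d}. c a * ((p u i - p v i) * (f a u i - f a v i)))"
      by (rule sum.swap)
    also have "\<dots> = (\<Sum>a\<in>A. c a * R (f a) (u,v))"
      using True by (simp add: R_edge sum_distrib_left)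
    finally show ?thesis .
  qed (simp add: R_nonedge)
qed

lemma card_pairs: "card {(k, j). 1 \<le> k \<and> k \<le> j \<and> j \<le> (n::nat)} = (n + 1) choose 2"
proof (induction n)
  case 0
  have e: "{(k, j). 1 \<le> k \<and> k \<le> j \<and> j \<le> (0::nat)} = {}" by auto
  show ?case by (subst e) simp
next
  case (Suc n)
  have "{(k, j). 1 \<le> k \<and> k \<le> j \<and> j \<le> Suc n} =
     {(k, j). 1 \<le> k \<and> k \<le> j \<and> j \<le> n} \<union> (\<lambda>k. (k, Suc n)) ` {1..Suc n}" by auto
  moreover have "finite {(k, j). 1 \<le> k \<and> k \<le> j \<and> j \<le> (n::nat)}"
    by (rule finite_subset[of _ "{1..n} \<times> {1..n}"]) auto
  moreover have "{(k, j). 1 \<le> k \<and> k \<le> j \<and> j \<le> n} \<inter> (\<lambda>k. (k, Suc n)) ` {1..Suc n} = {}" by auto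
  moreover have "card ((\<lambda>k. (k, Suc n)) ` {1..Suc n}) = Suc n"
    by (subst card_image) (auto simp: inj_on_def)
  ultimately have "card {(k, j). 1 \<le> k \<and> k \<le> j \<and> j \<le> Suc n} = (n + 1 choose 2) + Suc n"
    using Suc.IH by (simp add: card_Un_disjoint)
  then show ?case by (simp add: numeral_2_eq_2)
qed

lemma card_allowed:
  "card (V \<times> {1..d} - {(vs k, j) | k j. 1 \<le> k \<and> k \<le> j \<and> j \<le> d}) = card V * d - ((d + 1) choose 2)
   \<and> ((d + 1) choose 2) \<le> card V * d"
proof -
  let ?P = "{(k, j). 1 \<le> k \<and> k \<le> j \<and> j \<le> d}"
  let ?B = "{(vs k, j) | k j. 1 \<le> k \<and> k \<le> j \<and> j \<le> d}"
  have BP: "?B = (\<lambda>(k,j). (vs k, j)) ` ?P"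
  proof (rule set_eqI, rule iffI)
    fix x assume "x \<in> ?B"
    then obtain k j where kj: "x = (vs k, j)" "1 \<le> k" "k \<le> j" "j \<le> d" by blast
    then show "x \<in> (\<lambda>(k,j). (vs k, j)) ` ?P" by (intro image_eqI[of _ _ "(k,j)"]) auto
  next
    fix x assume "x \<in> (\<lambda>(k,j). (vs k, j)) ` ?P"
    then obtain k j where "(k,j) \<in> ?P" "x = (vs k, j)" by auto
    then show "x \<in> ?B" by blast
  qed
  have "inj_on (\<lambda>(k,j). (vs k, j)) ?P"
  proof (rule inj_onI)
    fix x y assume x: "x \<in> ?P" and y: "y \<in> ?P" and e: "(\<lambda>(k,j). (vs k, j)) x = (\<lambda>(k,j). (vs k, j)) y"
    obtain k j where xk: "x = (k,j)" by (cases x)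
    obtain k' j' where yk: "y = (k',j')" by (cases y)
    have "vs k = vs k'" "j = j'" using e xk yk by auto
    moreover have "k \<in> {1..d}" "k' \<in> {1..d}" using x y xk yk by auto
    ultimately show "x = y" using inj_onD[OF inj] xk yk by auto
  qed
  then have cB: "card ?B = (d + 1) choose 2" unfolding BP using card_pairs[of d] by (simp add: card_image)
  have sub: "?B \<subseteq> V \<times> {1..d}" using vsV by auto
  have fin2: "finite (V \<times> {1..d})" using fin by auto
  have "card ?B \<le> card V * d" using card_mono[OF fin2 sub] by (simp add: card_cartesian_product)
  moreover have "card (V \<times> {1..d} - ?B) = card V * d - card ?B"
    using card_Diff_subset[OF finite_subset[OF sub fin2] sub] by (simp add: card_cartesian_product)
  ultimately show ?thesis using cB by simp
qed


lemma extra_vertex: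
  assumes cV: "card V = d + 1"
  obtains w where "w \<in> V" "w \<notin> vs ` {1..d}" "V = insert w (vs ` {1..d})"
proof -
  have ci: "card (vs ` {1..d}) = d" using inj by (simp add: card_image)
  then have "V \<noteq> vs ` {1..d}" using cV by auto
  then obtain w where w: "w \<in> V" "w \<notin> vs ` {1..d}" using vsV by blast
  have "insert w (vs ` {1..d}) \<subseteq> V" using w vsV by auto
  moreover have "card (insert w (vs ` {1..d})) = card V" using w ci cV by simp
  ultimately have "V = insert w (vs ` {1..d})" using fin by (metis card_subset_eq)
  then show ?thesis using that w by blast
qed

lemma pivot_w:
  assumes affV: "aff_indep d V p" and d1: "1 \<le> d"
    and w: "w \<in> V" "w \<notin> vs ` {1..d}" "V = insert w (vs ` {1..d})"
  shows "p w d \<noteq> 0"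
proof
  assume z: "p w d = 0"
  have "\<exists>c. \<forall>l. p w l = (\<Sum>j\<in>{2..d}. c j * p (vs j) l)"
  proof (rule span_tri[of d "\<lambda>j. p (vs j)"])
    fix j l assume "2 \<le> j" "j \<le> d" "l = 0 \<or> j \<le> l"
    then show "p (vs j) l = 0" using p_vs[of j l] p_out[of "vs j" 0] by auto
  next
    fix m assume "1 \<le> m" "Suc m \<le> d"
    then show "p (vs (Suc m)) m \<noteq> 0" using pivot[of m] by auto
  next
    fix l assume lh: "l = 0 \<or> d \<le> l"
    then show "p w l = 0" using z p_out[of w l] by (cases "l = d") auto
  qed (use d1 in auto)
  then obtain c where c: "\<forall>l. p w l = (\<Sum>j\<in>{2..d}. c j * p (vs j) l)" by blast
  define e' where "e' k = (if k = 1 then 1 - (\<Sum>j\<in>{2..d}. c j) else c k)" for k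
  define e where "e v = (if v = w then -1 else e' (the_inv_into {1..d} vs v))" for v
  have esum: "(\<Sum>v\<in>V. e v * g v) = - g w + (1 - (\<Sum>j\<in>{2..d}. c j)) * g (vs 1)
      + (\<Sum>j\<in>{2..d}. c j * g (vs j))" for g :: "'a \<Rightarrow> complex"
  proof -
    have "(\<Sum>v\<in>V. e v * g v) = e w * g w + (\<Sum>v\<in>vs ` {1..d}. e v * g v)"
      using w by (simp add: sum.insert)
    also have "(\<Sum>v\<in>vs ` {1..d}. e v * g v) = (\<Sum>k\<in>{1..d}. e (vs k) * g (vs k))"
      using inj by (simp add: sum.reindex)
    also have "\<dots> = (\<Sum>k\<in>{1..d}. e' k * g (vs k))"
    proof (rule sum.cong)
      fix k assume k: "k \<in> {1..d}"
      then have "vs k \<noteq> w" using w by auto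
      then show "e (vs k) * g (vs k) = e' k * g (vs k)"
        unfolding e_def using the_inv_into_f_f[OF inj k] by simp
    qed simp
    also have "{1..d} = insert 1 {2..d}" using d1 by auto
    also have "(\<Sum>k\<in>insert 1 {2..d}. e' k * g (vs k)) = e' 1 * g (vs 1) + (\<Sum>k\<in>{2..d}. e' k * g (vs k))"
      by (simp add: sum.insert)
    also have "(\<Sum>k\<in>{2..d}. e' k * g (vs k)) = (\<Sum>j\<in>{2..d}. c j * g (vs j))"
      by (rule sum.cong) (auto simp: e'_def)
    finally show ?thesis by (simp add: e_def e'_def)
  qed
  have h: "sum e V = 0 \<and> (\<forall>i\<in>{1..d}. (\<Sum>v\<in>V. e v * p v i) = 0)"
  proof (intro conjI ballI)
    show "sum e V = 0" using esum[of "\<lambda>_. 1"] by simp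
    fix i assume "i \<in> {1..d}"
    show "(\<Sum>v\<in>V. e v * p v i) = 0"
      using esum[of "\<lambda>v. p v i"] c[rule_format, of i] p_vs1[of i] by simp
  qed
  have "e w = 0" using affV[unfolded aff_indep_def, rule_format, OF h] w by auto
  then show False unfolding e_def by simp
qed

lemma inj_X:
  assumes K: "complete_graph V E" and cV: "card V = d + 1" and affV: "aff_indep d V p"
    and qX: "q \<in> X_space d V vs" and Rq: "\<And>e. e \<in> E \<Longrightarrow> R q e = 0"
  shows "q = (\<lambda>v l. 0)"
proof -
  have q0: "q v l = 0" if "v \<notin> V \<or> l \<notin> {1..d}" for v l
    using qX that unfolding X_space_def conf_space_def by auto
  have qvs: "q (vs k) j = 0" if "1 \<le> k" "k \<le> j" "j \<le> d" for k j
    using qX that unfolding X_space_def by auto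
  have B: "(\<Sum>i\<in>{1..d}. (p u i - p v i) * (q u i - q v i)) = 0"
    if uv: "u \<in> V" "v \<in> V" "u \<noteq> v" for u v
  proof -
    have "(u,v) \<in> E \<or> (v,u) \<in> E" using K uv unfolding complete_graph_def by auto
    then show ?thesis
    proof
      assume "(u,v) \<in> E" then show ?thesis using Rq[of "(u,v)"] R_edge by simp
    next
      assume "(v,u) \<in> E"
      then have "(\<Sum>i\<in>{1..d}. (p v i - p u i) * (q v i - q u i)) = 0" using Rq[of "(v,u)"] R_edge by simp
      moreover have "(\<Sum>i\<in>{1..d}. (p v i - p u i) * (q v i - q u i)) = (\<Sum>i\<in>{1..d}. (p u i - p v i) * (q u i - q v i))"
        by (rule sum.cong) (auto simp: algebra_simps)
      ultimately show ?thesis by simp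
    qed
  qed
  obtain w where w: "w \<in> V" "w \<notin> vs ` {1..d}" "V = insert w (vs ` {1..d})"
    using extra_vertex[OF cV] by blast
  show ?thesis
  proof (cases "d = 0")
    case True
    then show ?thesis using q0 by (auto simp: fun_eq_iff)
  next
    case False
    then have d1: "1 \<le> d" by simp
    have pw: "p w d \<noteq> 0" using pivot_w[OF affV d1 w] .
    define y where "y j = (if j \<le> d then p (vs j) else p w)" for j
    have ysupp: "y j l = 0" if "2 \<le> j" "j \<le> Suc d" "l = 0 \<or> j \<le> l" for j l
      using that p_vs[of j l] p_out[of "vs j" 0] p_out[of w l] unfolding y_def by auto
    have ypiv: "y (Suc m) m \<noteq> 0" if "1 \<le> m" "Suc m \<le> Suc d" for m
    proof (cases "Suc m \<le> d")
      case True then show ?thesis using pivot[of m] that unfolding y_def by auto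
    next
      case False then have "m = d" using that by auto
      then show ?thesis using pw unfolding y_def by auto
    qed
    define S where "S x z = (\<Sum>i\<in>{1..d}. x i * z i)" for x z :: "nat \<Rightarrow> complex"
    have Sdiff: "S (\<lambda>i. x i - x' i) z = S x z - S x' z" for x x' z
      unfolding S_def by (simp add: sum_subtractf[symmetric] left_diff_distrib)
    have vsV': "vs k \<in> V" if "k \<in> {1..d}" for k using vsV that by auto
    have qk: "\<forall>l. q (vs k) l = 0" if "1 \<le> k" "k \<le> d" for k
      using that
    proof (induction k rule: less_induct)
      case (less k)
      show ?case
      proof (cases "k = 1")
        case True
        show ?thesis
        proof
          fix l show "q (vs k) l = 0" using qvs[of 1 l] q0[of "vs 1" l] True by (cases "l \<in> {1..d}") auto
        qed
      next
        case False
        then obtain m where km: "k = Suc m" and m1: "1 \<le> m" using less.prems by (cases k) auto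
        have IHk: "q (vs j) l = 0" if "1 \<le> j" "j < k" for j l using less.IH[of j] that less.prems by auto
        have Sj: "S (\<lambda>i. p (vs k) i - p (vs j) i) (q (vs k)) = 0" if "1 \<le> j" "j < k" for j
        proof -
          have "vs k \<noteq> vs j" using inj_onD[OF inj, of k j] that less.prems by auto
          then show ?thesis using B[of "vs k" "vs j"] vsV' that less.prems IHk[OF that]
            unfolding S_def by simp
        qed
        have Sself: "S (p (vs k)) (q (vs k)) = 0"
          using Sj[of 1] m1 km p_vs1 unfolding S_def by simp
        have orth0: "S (p (vs j)) (q (vs k)) = 0" if "1 \<le> j" "j < k" for j
          using Sj[OF that] Sself Sdiff by simp
        have low: "\<forall>l. 1 \<le> l \<and> l \<le> m - 1 \<longrightarrow> q (vs k) l = 0"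
        proof (rule orth_tri[of "Suc d" y])
          show "y j l = 0" if "2 \<le> j" "j \<le> Suc d" "l = 0 \<or> j \<le> l" for j l using ysupp that by auto
          show "y (Suc n) n \<noteq> 0" if "1 \<le> n" "Suc n \<le> Suc d" for n using ypiv that by auto
          show "(\<Sum>l\<in>{1..d}. y j l * q (vs k) l) = 0" if "2 \<le> j" "j \<le> Suc (m - 1)" for j
            using orth0[of j] that km less.prems m1 unfolding S_def y_def by auto
        qed (use km less.prems in auto)
        have "S (p (vs k)) (q (vs k)) = p (vs k) m * q (vs k) m"
          unfolding S_def
        proof (rule sum_single)
          fix l assume l: "l \<in> {1..d}" "l \<noteq> m"
          show "p (vs k) l * q (vs k) l = 0"
          proof (cases "l < m")
            case True then show ?thesis using low l by auto
          next
            case False then show ?thesis using l km p_vs[of k l] by auto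
          qed
        qed (use km less.prems m1 in auto)
        then have "q (vs k) m = 0" using Sself pivot[of m] m1 km less.prems by auto
        show ?thesis
        proof
          fix l
          consider "l = 0" | "1 \<le> l \<and> l \<le> m - 1" | "l = m" | "k \<le> l"
            using km by linarith
          then show "q (vs k) l = 0"
          proof cases
            case 1 then show ?thesis using q0 by auto
          next
            case 2 then show ?thesis using low by auto
          next
            case 3 then show ?thesis using \<open>q (vs k) m = 0\<close> by simp
          next
            case 4 then show ?thesis using qvs[of k l] q0[of "vs k" l] less.prems by (cases "l \<le> d") auto
          qed
        qed
      qed
    qed
    have qw: "\<forall>l. q w l = 0"
    proof -
      have Sj: "S (\<lambda>i. p w i - p (vs j) i) (q w) = 0" if "1 \<le> j" "j \<le> d" for j
      proof -
        have "w \<noteq> vs j" using w that by auto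
        then show ?thesis using B[of w "vs j"] vsV' that w qk[OF that]
          unfolding S_def by simp
      qed
      have Sself: "S (p w) (q w) = 0"
        using Sj[of 1] d1 p_vs1 unfolding S_def by simp
      have orth0: "S (p (vs j)) (q w) = 0" if "1 \<le> j" "j \<le> d" for j
        using Sj[OF that] Sself Sdiff by simp
      have low: "\<forall>l. 1 \<le> l \<and> l \<le> d - 1 \<longrightarrow> q w l = 0"
      proof (rule orth_tri[of "Suc d" y])
        show "y j l = 0" if "2 \<le> j" "j \<le> Suc d" "l = 0 \<or> j \<le> l" for j l using ysupp that by auto
        show "y (Suc n) n \<noteq> 0" if "1 \<le> n" "Suc n \<le> Suc d" for n using ypiv that by auto
        show "(\<Sum>l\<in>{1..d}. y j l * q w l) = 0" if "2 \<le> j" "j \<le> Suc (d - 1)" for j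
          using orth0[of j] that d1 unfolding S_def y_def by auto
      qed (use d1 in auto)
      have "S (p w) (q w) = p w d * q w d"
        unfolding S_def
      proof (rule sum_single)
        fix l assume l: "l \<in> {1..d}" "l \<noteq> d"
        then show "p w l * q w l = 0" using low by auto
      qed (use d1 in auto)
      then have qwd: "q w d = 0" using Sself pw by auto
      show ?thesis
      proof
        fix l
        show "q w l = 0"
        proof (cases "l \<in> {1..d}")
          case True
          then show ?thesis using low qwd by (cases "l = d") auto
        qed (use q0 in auto)
      qed
    qed
    show ?thesis
    proof (rule ext, rule ext)
      fix v l
      show "q v l = 0"
      proof (cases "v \<in> V")
        case True
        then consider "v = w" | k where "k \<in> {1..d}" "v = vs k" using w by auto
        then show ?thesis
        proof cases
          case 1 then show ?thesis using qw by simp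
        next
          case 2 then show ?thesis using qk[of k] by auto
        qed
      qed (use q0 in auto)
    qed
  qed
qed


lemma rank_K:
  assumes K: "complete_graph V E" and cV: "card V = d + 1" and affV: "aff_indep d V p"
  shows "rank_on d E p (X_space d V vs) = card (V \<times> {1..d} - {(vs k, j) | k j. 1 \<le> k \<and> k \<le> j \<and> j \<le> d})"
proof -
  define A where "A = V \<times> {1..d} - {(vs k, j) | k j. 1 \<le> k \<and> k \<le> j \<and> j \<le> d}"
  have finA: "finite A" unfolding A_def using fin by auto
  have XI: "q \<in> X_space d V vs" if "\<And>v l. (v, l) \<notin> A \<Longrightarrow> q v l = 0" for q
    unfolding X_space_def conf_space_def using that unfolding A_def by auto
  have dX: "delta a \<in> X_space d V vs" if "a \<in> A" for a
    by (rule XI) (use that in \<open>auto simp: delta_def\<close>)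
  have lc: "(\<Sum>a\<in>A. c a * delta a v l) = (if (v, l) \<in> A then c (v, l) else 0)" for c v l
  proof (cases "(v, l) \<in> A")
    case True
    then show ?thesis by (simp add: delta_def sum_single[OF finA True])
  next
    case False
    then show ?thesis by (auto simp: delta_def intro!: sum.neutral)
  qed
  have Xrep: "q = (\<lambda>v l. \<Sum>a\<in>A. q (fst a) (snd a) * delta a v l)" if qX: "q \<in> X_space d V vs" for q
  proof (rule ext, rule ext)
    fix v l
    show "q v l = (\<Sum>a\<in>A. q (fst a) (snd a) * delta a v l)"
    proof (cases "(v, l) \<in> A")
      case True then show ?thesis using lc[of "\<lambda>a. q (fst a) (snd a)" v l] by simp
    next
      case False
      then have "q v l = 0" using qX unfolding A_def X_space_def conf_space_def by auto
      then show ?thesis using lc[of "\<lambda>a. q (fst a) (snd a)" v l] False by simp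
    qed
  qed
  have injB: "inj_on (\<lambda>a. R (delta a)) A"
  proof (rule inj_onI)
    fix a b assume a: "a \<in> A" and b: "b \<in> A" and e: "R (delta a) = R (delta b)"
    let ?q = "\<lambda>v l. delta a v l - delta b v l"
    have "?q \<in> X_space d V vs"
      by (rule XI) (use a b in \<open>auto simp: delta_def\<close>)
    moreover have "R ?q e' = 0" for e' using R_diff_fun[of "delta a" "delta b" e'] e by simp
    ultimately have "?q = (\<lambda>v l. 0)" using inj_X[OF K cV affV] by blast
    then have "?q (fst a) (snd a) = 0" by (rule fun_cong[OF fun_cong[of _ _ "fst a"], of _ _ "snd a", simplified])
    then show "a = b" unfolding delta_def by (auto split: if_splits)
  qed
  define Bi where "Bi = (\<lambda>a. R (delta a)) ` A"
  have finB: "finite Bi" unfolding Bi_def using finA by simp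
  have sumfun: "(\<Sum>a\<in>A. cscale (c a) (R (delta a))) = (\<lambda>e. \<Sum>a\<in>A. c a * R (delta a) e)" for c
    by (rule ext) (simp add: sum_fun_app cscale_def)
  have Rsum: "R (\<lambda>v l. \<Sum>a\<in>A. c a * delta a v l) = (\<Sum>a\<in>A. cscale (c a) (R (delta a)))" for c
    unfolding sumfun using R_lin[OF finA, of c delta] .
  have indep: "cs.independent Bi"
  proof
    assume "cs.dependent Bi"
    then obtain u where u: "\<exists>b\<in>Bi. u b \<noteq> 0" "(\<Sum>b\<in>Bi. cscale (u b) b) = 0"
      using cs.dependent_finite[OF finB] by blast
    define c where "c a = u (R (delta a))" for a
    have "(\<Sum>a\<in>A. cscale (c a) (R (delta a))) = 0"
      using u(2) unfolding Bi_def c_def by (simp add: sum.reindex[OF injB])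
    then have Rz: "R (\<lambda>v l. \<Sum>a\<in>A. c a * delta a v l) = 0" using Rsum by simp
    have R0: "R (\<lambda>v l. \<Sum>a\<in>A. c a * delta a v l) e = 0" for e
      using fun_cong[OF Rz, of e] by simp
    have Xm: "(\<lambda>v l. \<Sum>a\<in>A. c a * delta a v l) \<in> X_space d V vs"
    proof (rule XI)
      fix v l assume "(v, l) \<notin> A"
      then show "(\<Sum>a\<in>A. c a * delta a v l) = 0" using lc[of c v l] by simp
    qed
    have z: "(\<lambda>v l. \<Sum>a\<in>A. c a * delta a v l) = (\<lambda>v l. 0)"
      by (rule inj_X[OF K cV affV Xm R0])
    have "c a = 0" if "a \<in> A" for a
      using fun_cong[OF fun_cong[OF z, of "fst a"], of "snd a"] lc[of c "fst a" "snd a"] that by simp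
    then show False using u(1) unfolding Bi_def c_def by auto
  qed
  have sub: "Bi \<subseteq> R ` X_space d V vs" unfolding Bi_def using dX by auto
  have span: "R ` X_space d V vs \<subseteq> cs.span Bi"
  proof
    fix f assume "f \<in> R ` X_space d V vs"
    then obtain q where q: "q \<in> X_space d V vs" "f = R q" by auto
    have "f = R (\<lambda>v l. \<Sum>a\<in>A. q (fst a) (snd a) * delta a v l)"
      using Xrep[OF q(1)] q(2) by simp
    also have "\<dots> = (\<Sum>a\<in>A. cscale (q (fst a) (snd a)) (R (delta a)))"
      by (rule Rsum)
    finally have "f = (\<Sum>a\<in>A. cscale (q (fst a) (snd a)) (R (delta a)))" .
    also have "\<dots> \<in> cs.span Bi"
      by (intro cs.span_sum cs.span_scale cs.span_base) (auto simp: Bi_def)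
    finally show "f \<in> cs.span Bi" .
  qed
  have "card Bi = card A" unfolding Bi_def using injB by (simp add: card_image)
  then have "cs.dim (R ` X_space d V vs) = card A" using cs.dim_unique[OF sub span indep] by simp
  then show ?thesis unfolding rank_on_def A_def by simp
qed

end

theorem lemma2p6:
  fixes d :: nat and V :: "'a set" and E :: "('a \<times> 'a) set"
    and vs :: "nat \<Rightarrow> 'a" and p :: "'a \<Rightarrow> nat \<Rightarrow> complex"
  assumes "simple_graph V E"
    and "card V \<ge> d + 1"
    and "inj_on vs {1..d}" and "vs ` {1..d} \<subseteq> V"
    and "p \<in> X_space d V vs"
    and "aff_indep d {1..d} (\<lambda>k. p (vs k))"
  shows "int (rank_on d E p (X_space d V vs)) = int d * int (card V) - int ((d + 1) choose 2)
    \<longleftrightarrow> inf_rigid d V E p"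
proof -
  have fin: "finite V" and EV: "E \<subseteq> V \<times> V" using assms(1) unfolding simple_graph_def by auto
  note ctx = fin EV assms(3) assms(4) assms(5) assms(6)
  have img: "rank_on d E p (X_space d V vs) = rank_on d E p (conf_space d V)"
    unfolding rank_on_def using image_eq[OF ctx] by simp
  show ?thesis
  proof
    assume "int (rank_on d E p (X_space d V vs)) = int d * int (card V) - int ((d + 1) choose 2)"
    then show "inf_rigid d V E p" using img unfolding inf_rigid_def by simp
  next
    assume "inf_rigid d V E p"
    then consider "int (rank_on d E p (conf_space d V)) = int d * int (card V) - int ((d + 1) choose 2)"
      | "complete_graph V E" "card V \<le> d + 1" "aff_indep d V p"
      unfolding inf_rigid_def by blast
    then show "int (rank_on d E p (X_space d V vs)) = int d * int (card V) - int ((d + 1) choose 2)"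
    proof cases
      case 1 then show ?thesis using img by simp
    next
      case 2
      then have cV: "card V = d + 1" using assms(2) by simp
      have r: "rank_on d E p (X_space d V vs) = card V * d - ((d + 1) choose 2)"
        and le: "((d + 1) choose 2) \<le> card V * d"
        using rank_K[OF ctx 2(1) cV 2(3)] card_allowed[OF ctx] by auto
      show ?thesis unfolding r using le by (simp add: of_nat_diff algebra_simps)
    qed
  qed
qed

end
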